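(* (i) For every $n\ge1$, $\gamma(n)=2^{n-1}$. (ii) If $2\le m\le\infty$ and $n\ge1$, then $c_{\pi s,s+}(n,\ell_1^m)=2^{n-1}$.
   Context: All vector spaces are real. An ordered normed space is a real normed space $E$ together with a closed convex cone $E_+\subseteq E$ (positive elements) such that $E=E_+-E_+$ and such that, writing $\|x\|_+:=\inf\{\|y\|+\|z\|: x=y-z,\ y,z\in E_+\}$, the constant $c_+(E):=\sup\{\|x\|_+:\|x\|\le1\}$ is finite; $E^+$ denotes $E$ with the norm $\|\cdot\|_+$. $E^{\vee n}$ is the space of symmetric tensors in the algebraic tensor power $E^{\otimes n}$, and $x^{\otimes n}:=x\otimes\cdots\otimes x$. For a normed space $F$, $\|\mathbf{x}\|_{\pi s,F}:=\inf\{\sum_k|a_k|\,\|x_k\|^n : \mathbf{x}=\sum_k a_k x_k^{\otimes n},\ x_k\in F\}$, and for an ordered normed space $E$, $\|\mathbf{x}\|_{\pi s+,E}:=\inf\{\sum_k|a_k|\,\|x_k\|^n : \mathbf{x}=\sum_k a_k x_k^{\otimes n},\ x_k\in E_+\}$ (finite sums, $a_k\in\mathbb{R}$). $c_{\pi s,s+}(n,E):=\sup\{\|\mathbf{x}\|_{\pi s+,E}/\|\mathbf{x}\|_{\pi s,E}:0\ne\mathbf{x}\in E^{\vee n}\}$. $\gamma(n)$ is the smallest constant $C$ such that $\|\mathbf{x}\|_{\pi s+,E}\le C\,\|\mathbf{x}\|_{\pi s,E^+}$ for every ordered normed space $E$ and every $\mathbf{x}\in E^{\vee n}$. $\ell_1^m$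 ($1\le m<\infty$) is $\mathbb{R}^m$ with the $\ell_1$-norm, $\ell_1^\infty=\ell_1$, ordered coordinatewise. *)

theory Defs
  imports Complex_Main "HOL-Library.Function_Algebras" "HOL-Library.Extended_Nat" "HOL-Library.Extended_Real"
begin

instantiation "fun" :: (type, real_vector) real_vector
begin
definition scaleR_fun :: "real \<Rightarrow> ('a \<Rightarrow> 'b) \<Rightarrow> 'a \<Rightarrow> 'b" where
  "scaleR_fun r f = (\<lambda>x. r *\<^sub>R f x)"
instance
  by standard (auto simp: scaleR_fun_def fun_eq_iff scaleR_add_right scaleR_add_left)
end

definition is_norm_on :: "'a::real_vector set \<Rightarrow> ('a \<Rightarrow> real) \<Rightarrow> bool" where
  "is_norm_on V N \<longleftrightarrow>
     (\<forall>x\<in>V. 0 \<le> N x \<and> (N x = 0 \<longleftrightarrow> x = 0)) \<and>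
     (\<forall>c. \<forall>x\<in>V. N (c *\<^sub>R x) = \<bar>c\<bar> * N x) \<and>
     (\<forall>x\<in>V. \<forall>y\<in>V. N (x + y) \<le> N x + N y)"

definition is_subspace :: "'a::real_vector set \<Rightarrow> bool" where
  "is_subspace V \<longleftrightarrow> 0 \<in> V \<and> (\<forall>x\<in>V. \<forall>y\<in>V. x + y \<in> V) \<and> (\<forall>c. \<forall>x\<in>V. c *\<^sub>R x \<in> V)"

definition closed_convex_cone :: "'a::real_vector set \<Rightarrow> ('a \<Rightarrow> real) \<Rightarrow> 'a set \<Rightarrow> bool" where
  "closed_convex_cone V N K \<longleftrightarrow>
     K \<subseteq> V \<and> K \<noteq> {} \<and>
     (\<forall>x\<in>K. \<forall>y\<in>K. x + y \<in> K) \<and>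
     (\<forall>c\<ge>0. \<forall>x\<in>K. c *\<^sub>R x \<in> K) \<and>
     (\<forall>s x. (\<forall>k. s k \<in> K) \<longrightarrow> x \<in> V \<longrightarrow> (\<lambda>k. N (s k - x)) \<longlonglongrightarrow> 0 \<longrightarrow> x \<in> K)"

definition plus_norm :: "('a::real_vector \<Rightarrow> real) \<Rightarrow> 'a set \<Rightarrow> 'a \<Rightarrow> real" where
  "plus_norm N K x = Inf {N y + N z | y z. y \<in> K \<and> z \<in> K \<and> x = y - z}"

definition ordered_normed_space :: "'a::real_vector set \<Rightarrow> ('a \<Rightarrow> real) \<Rightarrow> 'a set \<Rightarrow> bool" where
  "ordered_normed_space V N K \<longleftrightarrow>
     is_subspace V \<and> is_norm_on V N \<and> closed_convex_cone V N K \<and>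
     (\<forall>x\<in>V. \<exists>y\<in>K. \<exists>z\<in>K. x = y - z) \<and>
     (\<exists>C. \<forall>x\<in>V. N x \<le> 1 \<longrightarrow> plus_norm N K x \<le> C)"

text \<open>Symmetric tensors: a finite list [(a_k, x_k)] represents sum_k a_k x_k^{(tensor n)}.
Two lists represent the same symmetric tensor iff the associated homogeneous
polynomials f \<mapsto> sum_k a_k (f x_k)^n agree on all (algebraic) linear functionals f on V.\<close>

definition lin_functional_on :: "'a::real_vector set \<Rightarrow> ('a \<Rightarrow> real) \<Rightarrow> bool" where
  "lin_functional_on V f \<longleftrightarrow>
     (\<forall>x\<in>V. \<forall>y\<in>V. f (x + y) = f x + f y) \<and> (\<forall>c. \<forall>x\<in>V. f (c *\<^sub>R x) = c * f x)"

definition tensor_poly :: "nat \<Rightarrow> ('a \<Rightarrow> real) \<Rightarrow> (real \<times> 'a) list \<Rightarrow> real" where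
  "tensor_poly n f xs = (\<Sum>(a, x)\<leftarrow>xs. a * (f x) ^ n)"

definition sym_tensor_eq :: "'a::real_vector set \<Rightarrow> nat \<Rightarrow> (real \<times> 'a) list \<Rightarrow> (real \<times> 'a) list \<Rightarrow> bool" where
  "sym_tensor_eq V n xs ys \<longleftrightarrow>
     (\<forall>f. lin_functional_on V f \<longrightarrow> tensor_poly n f xs = tensor_poly n f ys)"

definition sym_tensors :: "'a set \<Rightarrow> (real \<times> 'a) list set" where
  "sym_tensors V = {xs. set (map snd xs) \<subseteq> V}"

definition rep_cost :: "('a \<Rightarrow> real) \<Rightarrow> nat \<Rightarrow> (real \<times> 'a) list \<Rightarrow> real" where
  "rep_cost N n ys = (\<Sum>(a, y)\<leftarrow>ys. \<bar>a\<bar> * (N y) ^ n)"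

definition pi_s_norm :: "'a::real_vector set \<Rightarrow> ('a \<Rightarrow> real) \<Rightarrow> nat \<Rightarrow> (real \<times> 'a) list \<Rightarrow> real" where
  "pi_s_norm V N n xs = Inf {rep_cost N n ys | ys. set (map snd ys) \<subseteq> V \<and> sym_tensor_eq V n ys xs}"

definition pi_s_plus_norm :: "'a::real_vector set \<Rightarrow> ('a \<Rightarrow> real) \<Rightarrow> 'a set \<Rightarrow> nat \<Rightarrow> (real \<times> 'a) list \<Rightarrow> real" where
  "pi_s_plus_norm V N K n xs = Inf {rep_cost N n ys | ys. set (map snd ys) \<subseteq> K \<and> sym_tensor_eq V n ys xs}"

definition c_pis_splus :: "nat \<Rightarrow> 'a::real_vector set \<Rightarrow> ('a \<Rightarrow> real) \<Rightarrow> 'a set \<Rightarrow> ereal" where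
  "c_pis_splus n V N K =
     (SUP xs \<in> {xs \<in> sym_tensors V. \<not> sym_tensor_eq V n xs []}.
        ereal (pi_s_plus_norm V N K n xs / pi_s_norm V N n xs))"

text \<open>l_1^m (m finite, coordinates 0..m-1) and l_1 = l_1^\<infinity>, as subspaces of nat \<Rightarrow> real.\<close>
definition l1_space :: "enat \<Rightarrow> (nat \<Rightarrow> real) set" where
  "l1_space m = {x. summable (\<lambda>i. \<bar>x i\<bar>) \<and> (\<forall>i. m \<le> enat i \<longrightarrow> x i = 0)}"

definition l1_norm :: "(nat \<Rightarrow> real) \<Rightarrow> real" where
  "l1_norm x = (\<Sum>i. \<bar>x i\<bar>)"

definition l1_cone :: "enat \<Rightarrow> (nat \<Rightarrow> real) set" where
  "l1_cone m = {x \<in> l1_space m. \<forall>i. 0 \<le> x i}"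

end

theory Submission
  imports Defs "HOL-Computational_Algebra.Polynomial"
begin
definition lagb :: "(nat \<Rightarrow> real) \<Rightarrow> nat \<Rightarrow> nat \<Rightarrow> real poly" where
  "lagb t n k = smult (1 / (\<Prod>i\<in>{..n}-{k}. (t k - t i))) (\<Prod>i\<in>{..n}-{k}. [:- t i, 1:])"

lemma poly_lagb: "poly (lagb t n k) x = (\<Prod>i\<in>{..n}-{k}. (x - t i) / (t k - t i))"
  by (simp add: lagb_def poly_prod prod_dividef)

lemma degree_lagb: assumes "k \<le> n" shows "degree (lagb t n k) \<le> n"
proof -
  have "degree (\<Prod>i\<in>{..n}-{k}. [:- t i, (1::real):]) \<le> sum (degree \<circ> (\<lambda>i. [:- t i, (1::real):])) ({..n}-{k})"
    by (rule degree_prod_sum_le) auto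
  also have "\<dots> \<le> card ({..n}-{k})" by simp
  also have "\<dots> \<le> n" using assms by (auto simp: card_Diff_singleton)
  finally show ?thesis unfolding lagb_def using degree_smult_le order_trans by blast
qed

lemma poly_lagb_node:
  assumes inj: "inj_on t {..n}" and j: "j \<le> n" and k: "k \<le> n"
  shows "poly (lagb t n k) (t j) = (if j = k then 1 else 0)"
proof (cases "j = k")
  case True
  have "(\<Prod>i\<in>{..n}-{k}. (t k - t i) / (t k - t i)) = 1"
    by (rule prod.neutral) (use inj k in \<open>auto simp: inj_on_def\<close>)
  then show ?thesis using True by (simp add: poly_lagb)
next
  case False
  have "(\<Prod>i\<in>{..n}-{k}. (t j - t i) / (t k - t i)) = 0"
    by (rule prod_zero) (use j False in auto)
  then show ?thesis using False by (simp add: poly_lagb)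
qed

lemma lagrange:
  assumes inj: "inj_on t {..n}" and deg: "degree h \<le> n"
  shows "poly h x = (\<Sum>k\<le>n. poly h (t k) * poly (lagb t n k) x)"
proof -
  define R where "R = h - (\<Sum>k\<le>n. smult (poly h (t k)) (lagb t n k))"
  have degR: "degree R \<le> n"
    unfolding R_def
    by (intro degree_diff_le deg degree_sum_le) (auto intro: order_trans[OF degree_smult_le] degree_lagb)
  have roots: "poly R (t j) = 0" if "j \<le> n" for j
  proof -
    have "(\<Sum>k\<le>n. poly h (t k) * poly (lagb t n k) (t j)) = (\<Sum>k\<le>n. if k = j then poly h (t j) else 0)"
      by (rule sum.cong) (use poly_lagb_node[OF inj that] in auto)
    also have "\<dots> = poly h (t j)" using that by simp
    finally show ?thesis by (simp add: R_def poly_sum)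
  qed
  have "R = 0"
  proof (rule ccontr)
    assume "R \<noteq> 0"
    then have fin: "finite {x. poly R x = 0}" and c: "card {x. poly R x = 0} \<le> degree R"
      using poly_roots_finite card_poly_roots_bound by blast+
    have "t ` {..n} \<subseteq> {x. poly R x = 0}" using roots by auto
    then have "card (t ` {..n}) \<le> card {x. poly R x = 0}" using fin by (rule card_mono[rotated])
    moreover have "card (t ` {..n}) = Suc n" using inj by (simp add: card_image)
    ultimately show False using c degR by simp
  qed
  then have "poly h x = poly (\<Sum>k\<le>n. smult (poly h (t k)) (lagb t n k)) x"
    unfolding R_def by simp
  then show ?thesis by (simp add: poly_sum)
qed

fun cheb :: "nat \<Rightarrow> real poly" where
  "cheb 0 = 1"
| "cheb (Suc 0) = [:0, 1:]"
| "cheb (Suc (Suc n)) = [:0, 2:] * cheb (Suc n) - cheb n"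

lemma cheb_cos: "poly (cheb n) (cos \<theta>) = cos (real n * \<theta>)"
proof (induction n rule: cheb.induct)
  case 1 then show ?case by simp
next
  case 2 then show ?case by simp
next
  case (3 n)
  have e: "cos (real (Suc (Suc n)) * \<theta>) = 2 * cos \<theta> * cos (real (Suc n) * \<theta>) - cos (real n * \<theta>)"
  proof -
    have a: "real (Suc (Suc n)) * \<theta> = real (Suc n) * \<theta> + \<theta>" and b: "real n * \<theta> = real (Suc n) * \<theta> - \<theta>"
      by (simp_all add: algebra_simps)
    show ?thesis unfolding a b cos_add cos_diff by (simp add: algebra_simps)
  qed
  show ?case using 3 e by simp
qed

lemma degree_cheb: "degree (cheb n) \<le> n"
proof (induction n rule: cheb.induct)
  case (3 n)
  have "degree ([:0, 2:] * cheb (Suc n)) \<le> Suc (Suc n)"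
    using degree_mult_le[of "[:0, 2::real:]" "cheb (Suc n)"] 3 by simp
  then show ?case using 3 by (simp add: degree_diff_le)
qed auto

lemma coeff_cheb_top: "coeff (cheb n) n = (if n = 0 then 1 else 2 ^ (n - 1))"
proof (induction n rule: cheb.induct)
  case (3 n)
  have z: "coeff (cheb n) (Suc (Suc n)) = 0"
    using degree_cheb[of n] by (intro coeff_eq_0) simp
  have m: "coeff ([:0, 2:] * p) (Suc k) = 2 * coeff p k" for p :: "real poly" and k
    by (simp add: mult_pCons_left)
  show ?case using 3 z m by simp
qed auto

lemma cheb_ext:
  assumes "c \<noteq> 0" "c\<^sup>2 \<le> 1"
  shows "c ^ n * poly (cheb n) (1 / c) = ((1 + sqrt (1 - c\<^sup>2)) ^ n + (1 - sqrt (1 - c\<^sup>2)) ^ n) / 2"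
proof (induction n rule: cheb.induct)
  case 1 then show ?case by simp
next
  case 2 then show ?case using assms by simp
next
  case (3 n)
  define s where "s = sqrt (1 - c\<^sup>2)"
  have ss: "s * s = 1 - c\<^sup>2" unfolding s_def using assms by (simp add: power2_eq_square[symmetric])
  have q1: "(1 + s) * (1 + s) = 2 * (1 + s) - c\<^sup>2" using ss by (simp add: algebra_simps)
  have q2: "(1 - s) * (1 - s) = 2 * (1 - s) - c\<^sup>2" using ss by (simp add: algebra_simps)
  have p1: "(1 + s) ^ Suc (Suc n) = 2 * (1 + s) ^ Suc n - c\<^sup>2 * (1 + s) ^ n"
  proof -
    have "(1 + s) ^ Suc (Suc n) = ((1 + s) * (1 + s)) * (1 + s) ^ n" by (simp add: algebra_simps)
    then show ?thesis unfolding q1 by (simp add: algebra_simps)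
  qed
  have p2: "(1 - s) ^ Suc (Suc n) = 2 * (1 - s) ^ Suc n - c\<^sup>2 * (1 - s) ^ n"
  proof -
    have "(1 - s) ^ Suc (Suc n) = ((1 - s) * (1 - s)) * (1 - s) ^ n" by (simp add: algebra_simps)
    then show ?thesis unfolding q2 by (simp add: algebra_simps)
  qed
  have "c ^ Suc (Suc n) * poly (cheb (Suc (Suc n))) (1 / c)
        = 2 * (c ^ Suc n * poly (cheb (Suc n)) (1 / c)) - c\<^sup>2 * (c ^ n * poly (cheb n) (1 / c))"
    using assms by (simp add: algebra_simps power2_eq_square)
  also have "\<dots> = ((2 * (1 + s) ^ Suc n - c\<^sup>2 * (1 + s) ^ n) + (2 * (1 - s) ^ Suc n - c\<^sup>2 * (1 - s) ^ n)) / 2"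
    unfolding 3(1) 3(2) s_def[symmetric] by (simp add: field_simps)
  also have "\<dots> = ((1 + s) ^ Suc (Suc n) + (1 - s) ^ Suc (Suc n)) / 2"
    unfolding p1 p2 ..
  finally show ?case unfolding s_def .
qed

lemma two_pow_bound:
  assumes "0 \<le> s" "s \<le> (1::real)" "n \<ge> 1"
  shows "(1 + s) ^ n + (1 - s) ^ n \<le> 2 ^ n"
  using assms(3)
proof (induction n rule: dec_induct)
  case base then show ?case by simp
next
  case (step n)
  have a: "(1 + s) ^ n * (s - 1) \<le> 0" using assms by (simp add: mult_nonneg_nonpos)
  have b: "0 \<le> (1 - s) ^ n * (1 + s)" using assms by simp
  have "(1 + s) ^ Suc n + (1 - s) ^ Suc n \<le> 2 * ((1 + s) ^ n + (1 - s) ^ n)"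
    using a b by (simp add: algebra_simps)
  then show ?case using step by simp
qed

lemma cheb_ext_bound:
  assumes "0 < c" "c < 1" "n \<ge> 1"
  shows "c ^ n * poly (cheb n) (1 / c) \<le> 2 ^ (n - 1)"
proof -
  have c2: "c\<^sup>2 \<le> 1" using assms by (simp add: power_le_one)
  have s: "0 \<le> sqrt (1 - c\<^sup>2)" "sqrt (1 - c\<^sup>2) \<le> 1" using c2 assms by auto
  have "2 * (c ^ n * poly (cheb n) (1 / c)) \<le> 2 ^ n"
    using cheb_ext[OF _ c2, of n] two_pow_bound[OF s assms(3)] assms by simp
  also have "(2::real) ^ n = 2 * 2 ^ (n - 1)" using assms(3) by (cases n) auto
  finally show ?thesis by simp
qed

definition cnode :: "nat \<Rightarrow> nat \<Rightarrow> real" where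
  "cnode n k = cos (real k * pi / real n)"

lemma cnode_decr:
  assumes "n \<ge> 1" "i < j" "j \<le> n"
  shows "cnode n j < cnode n i"
  unfolding cnode_def
proof (rule cos_monotone_0_pi)
  show "0 \<le> real i * pi / real n" using assms by simp
  show "real i * pi / real n < real j * pi / real n"
    using assms by (intro divide_strict_right_mono mult_strict_right_mono) auto
  show "real j * pi / real n \<le> pi" using assms by (simp add: field_simps)
qed

lemma cnode_inj: "n \<ge> 1 \<Longrightarrow> inj_on (cnode n) {..n}"
  unfolding inj_on_def
  by (metis atMost_iff cnode_decr less_irrefl linorder_neqE_nat)

lemma cnode_cheb: "n \<ge> 1 \<Longrightarrow> poly (cheb n) (cnode n k) = (-1) ^ k"
proof -
  assume n: "n \<ge> 1"
  have "poly (cheb n) (cnode n k) = cos (real k * pi)"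
    unfolding cnode_def cheb_cos using n by (simp add: field_simps)
  then show ?thesis by simp
qed

lemma cnode_abs: "\<bar>cnode n k\<bar> \<le> 1" unfolding cnode_def by simp

lemma prod_neg_sign:
  fixes f :: "nat \<Rightarrow> real"
  assumes "\<And>i. i < k \<Longrightarrow> f i < 0"
  shows "0 < (-1) ^ k * (\<Prod>i<k. f i)"
proof -
  have "(-1) ^ k * (\<Prod>i<k. f i) = (\<Prod>i<k. - f i)" by (simp add: prod_uminus)
  also have "\<dots> > 0" using assms by (intro prod_pos) auto
  finally show ?thesis .
qed

lemma lagb_sign:
  assumes n: "n \<ge> 1" and k: "k \<le> n" and x: "x > 1"
  shows "0 < (-1) ^ k * poly (lagb (cnode n) n k) x"
proof -
  define f where "f i = (x - cnode n i) / (cnode n k - cnode n i)" for i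
  have split: "{..n} - {k} = {..<k} \<union> {k<..n}" using k by auto
  have "poly (lagb (cnode n) n k) x = (\<Prod>i<k. f i) * (\<Prod>i\<in>{k<..n}. f i)"
    unfolding poly_lagb split f_def by (subst prod.union_disjoint) auto
  moreover have "0 < (-1) ^ k * (\<Prod>i<k. f i)"
  proof (rule prod_neg_sign)
    fix i assume "i < k"
    then have "cnode n k < cnode n i" using cnode_decr[OF n _ k] by simp
    moreover have "cnode n i < x" using cnode_abs[of n i] x by linarith
    ultimately show "f i < 0" unfolding f_def by (simp add: divide_pos_neg)
  qed
  moreover have "0 < (\<Prod>i\<in>{k<..n}. f i)"
  proof (rule prod_pos)
    fix i assume "i \<in> {k<..n}"
    then have "cnode n i < cnode n k" using cnode_decr[OF n] by simp
    moreover have "cnode n i < x" using cnode_abs[of n i] x by linarith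
    ultimately show "0 < f i" unfolding f_def by simp
  qed
  ultimately show ?thesis by (simp add: mult.assoc[symmetric])
qed

lemma lagb_abs_sum:
  assumes n: "n \<ge> 1" and x: "x > 1"
  shows "(\<Sum>k\<le>n. \<bar>poly (lagb (cnode n) n k) x\<bar>) = poly (cheb n) x"
proof -
  have "poly (cheb n) x = (\<Sum>k\<le>n. poly (cheb n) (cnode n k) * poly (lagb (cnode n) n k) x)"
    by (rule lagrange[OF cnode_inj[OF n] degree_cheb])
  also have "\<dots> = (\<Sum>k\<le>n. \<bar>poly (lagb (cnode n) n k) x\<bar>)"
  proof (rule sum.cong)
    fix k assume "k \<in> {..n}"
    then have "0 < (-1) ^ k * poly (lagb (cnode n) n k) x" using lagb_sign[OF n _ x] by simp
    then show "poly (cheb n) (cnode n k) * poly (lagb (cnode n) n k) x = \<bar>poly (lagb (cnode n) n k) x\<bar>"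
      using cnode_cheb[OF n] by (cases "even k") (auto simp: abs_if)
  qed simp
  finally show ?thesis by simp
qed

lemma core_gt:
  assumes n: "n \<ge> 1" and B: "0 < (B::real)" and AB: "B < A"
  shows "\<exists>(N::nat) lam a b. (\<forall>k<N. 0 \<le> a k \<and> 0 \<le> b k) \<and>
           (\<forall>p q. (p - q) ^ n = (\<Sum>k<N. lam k * (a k * p + b k * q) ^ n)) \<and>
           (\<Sum>k<N. \<bar>lam k\<bar> * (a k * A + b k * B) ^ n) \<le> 2 ^ (n - 1) * (A + B) ^ n"
proof -
  define S where "S = A + B"
  define c where "c = (A - B) / S"
  define x0 where "x0 = 1 / c"
  define t where "t = cnode n"
  define lam where "lam k = c ^ n * poly (lagb t n k) x0" for k
  define a where "a k = S * (1 + t k) / (2 * A)" for k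
  define b where "b k = S * (1 - t k) / (2 * B)" for k
  have A: "0 < A" using B AB by simp
  have S: "0 < S" using A B by (simp add: S_def)
  have c0: "0 < c" "c < 1" using AB B S by (simp_all add: c_def S_def field_simps)
  have x0: "x0 > 1" using c0 by (simp add: x0_def field_simps)
  have cx: "c * x0 = 1" using c0 by (simp add: x0_def)
  have ab: "0 \<le> a k \<and> 0 \<le> b k" for k
    using cnode_abs[of n k] A B S by (auto simp: a_def b_def t_def abs_le_iff intro!: divide_nonneg_pos mult_nonneg_nonneg)
  have ident: "(p - q) ^ n = (\<Sum>k<Suc n. lam k * (a k * p + b k * q) ^ n)" for p q
  proof -
    define m where "m = (p / A + q / B) / 2"
    define d where "d = (p / A - q / B) / 2"
    have deg: "degree ([:m, d:] ^ n) \<le> n"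
      using degree_power_le[of "[:m, d:]" n] by (simp add: le_trans)
    have L: "(m + d * x0) ^ n = (\<Sum>k\<le>n. (m + d * t k) ^ n * poly (lagb t n k) x0)"
      using lagrange[OF cnode_inj[OF n] deg, of x0] by (simp add: t_def algebra_simps)
    have e1: "p - q = S * c * (m + d * x0)"
    proof -
      have Sc: "S * c = A - B" using S by (simp add: c_def)
      have "S * c * (m + d * x0) = (S * c) * m + S * d * (c * x0)"
        by (simp add: algebra_simps)
      also have "\<dots> = (A - B) * m + S * d * (c * x0)" unfolding Sc ..
      also have "\<dots> = (A - B) * m + (A + B) * d" by (simp add: cx S_def)
      also have "\<dots> = p - q" using A B by (simp add: m_def d_def field_simps)
      finally show ?thesis by simp
    qed
    have e2: "a k * p + b k * q = S * (m + d * t k)" for k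
      using A B by (simp add: a_def b_def m_def d_def field_simps)
    have "(p - q) ^ n = (S * c) ^ n * (m + d * x0) ^ n" unfolding e1 by (simp add: power_mult_distrib)
    also have "\<dots> = (\<Sum>k\<le>n. lam k * (S * (m + d * t k)) ^ n)"
      unfolding L sum_distrib_left lam_def by (rule sum.cong) (simp_all add: power_mult_distrib)
    also have "\<dots> = (\<Sum>k<Suc n. lam k * (a k * p + b k * q) ^ n)"
      unfolding e2 lessThan_Suc_atMost ..
    finally show ?thesis .
  qed
  have cost1: "a k * A + b k * B = S" for k
    using A B by (simp add: a_def b_def field_simps)
  have "(\<Sum>k<Suc n. \<bar>lam k\<bar> * (a k * A + b k * B) ^ n) = S ^ n * (c ^ n * (\<Sum>k\<le>n. \<bar>poly (lagb t n k) x0\<bar>))"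
    unfolding cost1 lessThan_Suc_atMost lam_def sum_distrib_left
    using c0 by (intro sum.cong) (auto simp: abs_mult)
  also have "\<dots> = S ^ n * (c ^ n * poly (cheb n) x0)"
    by (simp add: t_def lagb_abs_sum[OF n x0])
  also have "\<dots> = S ^ n * (c ^ n * poly (cheb n) (1 / c))"
    by (simp add: x0_def)
  also have "\<dots> \<le> S ^ n * 2 ^ (n - 1)"
    using cheb_ext_bound[OF c0 n] S by (intro mult_left_mono) auto
  finally have "(\<Sum>k<Suc n. \<bar>lam k\<bar> * (a k * A + b k * B) ^ n) \<le> 2 ^ (n - 1) * (A + B) ^ n"
    by (simp add: S_def mult.commute)
  then have all: "(\<forall>k<Suc n. 0 \<le> a k \<and> 0 \<le> b k) \<and>
           (\<forall>p q. (p - q) ^ n = (\<Sum>k<Suc n. lam k * (a k * p + b k * q) ^ n)) \<and>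
           (\<Sum>k<Suc n. \<bar>lam k\<bar> * (a k * A + b k * B) ^ n) \<le> 2 ^ (n - 1) * (A + B) ^ n"
    using ab ident by blast
  show ?thesis
    apply (intro exI) apply (rule all) done
qed

lemma core:
  assumes n: "n \<ge> 1" and A: "0 < (A::real)" and B: "0 < B" and AB: "A \<noteq> B"
  shows "\<exists>(N::nat) lam a b. (\<forall>k<N. 0 \<le> a k \<and> 0 \<le> b k) \<and>
           (\<forall>p q. (p - q) ^ n = (\<Sum>k<N. lam k * (a k * p + b k * q) ^ n)) \<and>
           (\<Sum>k<N. \<bar>lam k\<bar> * (a k * A + b k * B) ^ n) \<le> 2 ^ (n - 1) * (A + B) ^ n"
proof (cases "B < A")
  case True then show ?thesis using core_gt[OF n B] by blast
next
  case False
  then have "A < B" using AB by simp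
  from core_gt[OF n A this] obtain N :: nat and lam a b where
    h1: "\<forall>k<N. 0 \<le> a k \<and> 0 \<le> b k" and
    h2: "\<forall>p q. (p - q) ^ n = (\<Sum>k<N. lam k * (a k * p + b k * q) ^ n)" and
    h3: "(\<Sum>k<N. \<bar>lam k\<bar> * (a k * B + b k * A) ^ n) \<le> 2 ^ (n - 1) * (B + A) ^ n"
    by blast
  have i: "(p - q) ^ n = (\<Sum>k<N. ((-1) ^ n * lam k) * (b k * p + a k * q) ^ n)" for p q
  proof -
    have "(p - q) ^ n = (-1) ^ n * (q - p) ^ n"
      by (metis minus_diff_eq power_minus)
    also have "\<dots> = (\<Sum>k<N. ((-1) ^ n * lam k) * (b k * p + a k * q) ^ n)"
      using h2 by (simp add: sum_distrib_left algebra_simps)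
    finally show ?thesis .
  qed
  have c: "(\<Sum>k<N. \<bar>(-1) ^ n * lam k\<bar> * (b k * A + a k * B) ^ n) \<le> 2 ^ (n - 1) * (A + B) ^ n"
    using h3 by (simp add: abs_mult add.commute)
  define lam' where "lam' k = (-1) ^ n * lam k" for k
  have h1': "\<forall>k<N. 0 \<le> b k \<and> 0 \<le> a k" using h1 by auto
  have all: "(\<forall>k<N. 0 \<le> b k \<and> 0 \<le> a k) \<and>
      (\<forall>p q. (p - q) ^ n = (\<Sum>k<N. lam' k * (b k * p + a k * q) ^ n)) \<and>
      (\<Sum>k<N. \<bar>lam' k\<bar> * (b k * A + a k * B) ^ n) \<le> 2 ^ (n - 1) * (A + B) ^ n"
    using h1' i c unfolding lam'_def by auto
  show ?thesis
    apply (intro exI) apply (rule all) done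
qed

lemma tensor_poly_Nil[simp]: "tensor_poly n f [] = 0" by (simp add: tensor_poly_def)
lemma tensor_poly_Cons[simp]: "tensor_poly n f ((a, x) # ys) = a * f x ^ n + tensor_poly n f ys"
  by (simp add: tensor_poly_def)
lemma tensor_poly_append[simp]: "tensor_poly n f (xs @ ys) = tensor_poly n f xs + tensor_poly n f ys"
  by (simp add: tensor_poly_def)
lemma rep_cost_Nil[simp]: "rep_cost N n [] = 0" by (simp add: rep_cost_def)
lemma rep_cost_Cons[simp]: "rep_cost N n ((a, x) # ys) = \<bar>a\<bar> * N x ^ n + rep_cost N n ys"
  by (simp add: rep_cost_def)
lemma rep_cost_append[simp]: "rep_cost N n (xs @ ys) = rep_cost N n xs + rep_cost N n ys"
  by (simp add: rep_cost_def)

lemma tensor_poly_scale: "tensor_poly n f (map (\<lambda>(c, w). (a * c, w)) L) = a * tensor_poly n f L"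
  by (induction L) (auto simp: algebra_simps)
lemma rep_cost_scale: "rep_cost N n (map (\<lambda>(c, w). (a * c, w)) L) = \<bar>a\<bar> * rep_cost N n L"
  by (induction L) (auto simp: algebra_simps abs_mult)

lemma rep_cost_nonneg: "(\<And>w. w \<in> set (map snd ys) \<Longrightarrow> 0 \<le> N w) \<Longrightarrow> 0 \<le> rep_cost N n ys"
  by (induction ys) auto

lemma tensor_poly_upt: "tensor_poly n f (map (\<lambda>k. (c k, w k)) [0..<M]) = (\<Sum>k<M. c k * f (w k) ^ n)"
  by (induction M) auto
lemma rep_cost_upt: "rep_cost N n (map (\<lambda>k. (c k, w k)) [0..<M]) = (\<Sum>k<M. \<bar>c k\<bar> * N (w k) ^ n)"
  by (induction M) auto

context
  fixes V :: "'a::real_vector set" and N K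
  assumes ons: "ordered_normed_space V N K"
begin

lemma ons_sub: "is_subspace V" using ons by (simp add: ordered_normed_space_def)
lemma ons_norm: "is_norm_on V N" using ons by (simp add: ordered_normed_space_def)
lemma ons_cone: "closed_convex_cone V N K" using ons by (simp add: ordered_normed_space_def)

lemma KV: "x \<in> K \<Longrightarrow> x \<in> V" using ons_cone by (auto simp: closed_convex_cone_def)
lemma K_add: "x \<in> K \<Longrightarrow> y \<in> K \<Longrightarrow> x + y \<in> K" using ons_cone by (auto simp: closed_convex_cone_def)
lemma K_scale: "0 \<le> c \<Longrightarrow> x \<in> K \<Longrightarrow> c *\<^sub>R x \<in> K" using ons_cone by (auto simp: closed_convex_cone_def)
lemma V_add: "x \<in> V \<Longrightarrow> y \<in> V \<Longrightarrow> x + y \<in> V" using ons_sub by (auto simp: is_subspace_def)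
lemma V_scale: "x \<in> V \<Longrightarrow> c *\<^sub>R x \<in> V" using ons_sub by (auto simp: is_subspace_def)
lemma N_nonneg: "x \<in> V \<Longrightarrow> 0 \<le> N x" using ons_norm by (auto simp: is_norm_on_def)
lemma N_scale: "x \<in> V \<Longrightarrow> N (c *\<^sub>R x) = \<bar>c\<bar> * N x" using ons_norm by (auto simp: is_norm_on_def)
lemma N_tri: "x \<in> V \<Longrightarrow> y \<in> V \<Longrightarrow> N (x + y) \<le> N x + N y" using ons_norm by (auto simp: is_norm_on_def)
lemma V_decomp: "x \<in> V \<Longrightarrow> \<exists>y\<in>K. \<exists>z\<in>K. x = y - z" using ons by (auto simp: ordered_normed_space_def)

lemma N_comb:
  assumes "y \<in> V" "z \<in> V" "0 \<le> a" "0 \<le> b"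
  shows "N (a *\<^sub>R y + b *\<^sub>R z) \<le> a * N y + b * N z"
proof -
  have "N (a *\<^sub>R y + b *\<^sub>R z) \<le> N (a *\<^sub>R y) + N (b *\<^sub>R z)"
    using assms by (intro N_tri V_scale)
  also have "\<dots> = a * N y + b * N z" using assms by (simp add: N_scale)
  finally show ?thesis .
qed

lemma lin_comb:
  assumes "lin_functional_on V f" "y \<in> V" "z \<in> V"
  shows "f (a *\<^sub>R y + b *\<^sub>R z) = a * f y + b * f z"
  using assms V_scale by (simp add: lin_functional_on_def)

lemma lin_diff:
  assumes "lin_functional_on V f" "y \<in> V" "z \<in> V"
  shows "f (y - z) = f y - f z"
  using lin_comb[OF assms, of 1 "-1"] by simp

definition PS where "PS x = {N y + N z | y z. y \<in> K \<and> z \<in> K \<and> x = y - z}"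

lemma PS_ne: "x \<in> V \<Longrightarrow> PS x \<noteq> {}" using V_decomp unfolding PS_def by blast
lemma PS_bdd: "bdd_below (PS x)"
  unfolding PS_def bdd_below_def using N_nonneg KV by (intro exI[of _ 0]) (auto intro!: add_nonneg_nonneg)

lemma plus_norm_eq: "plus_norm N K x = Inf (PS x)" by (simp add: plus_norm_def PS_def)

lemma plus_norm_nonneg: "x \<in> V \<Longrightarrow> 0 \<le> plus_norm N K x"
  unfolding plus_norm_eq
  by (rule cInf_greatest[OF PS_ne]) (auto simp: PS_def intro!: add_nonneg_nonneg N_nonneg KV)

lemma plus_norm_approx:
  assumes "x \<in> V" "0 < e"
  shows "\<exists>y\<in>K. \<exists>z\<in>K. x = y - z \<and> N y + N z < plus_norm N K x + e"
proof -
  have "Inf (PS x) < plus_norm N K x + e" using assms by (simp add: plus_norm_eq)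
  from cInf_lessD[OF PS_ne[OF assms(1)] this] show ?thesis by (auto simp: PS_def)
qed

lemma single:
  assumes n: "n \<ge> 1" and x: "x \<in> V" and e: "0 < e"
  shows "\<exists>L. set (map snd L) \<subseteq> K \<and> (\<forall>f. lin_functional_on V f \<longrightarrow> tensor_poly n f L = f x ^ n) \<and>
             rep_cost N n L \<le> 2 ^ (n - 1) * (plus_norm N K x + e) ^ n"
proof -
  obtain y z where y: "y \<in> K" and z: "z \<in> K" and xyz: "x = y - z" and lt: "N y + N z < plus_norm N K x + e / 4"
    using plus_norm_approx[OF x, of "e / 4"] e by auto
  have yV: "y \<in> V" and zV: "z \<in> V" using y z KV by auto
  define A where "A = N y + e / 4"
  define B where "B = (if N y = N z then N z + e / 2 else N z + e / 4)"
  have A0: "0 < A" using N_nonneg[OF yV] e by (simp add: A_def)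
  have B0: "0 < B" using N_nonneg[OF zV] e by (simp add: B_def)
  have AB: "A \<noteq> B" using e by (auto simp: A_def B_def)
  have ABle: "A + B \<le> plus_norm N K x + e" using lt e by (auto simp: A_def B_def)
  from core[OF n A0 B0 AB] obtain M :: nat and lam a b where
    h1: "\<forall>k<M. 0 \<le> a k \<and> 0 \<le> b k" and
    h2: "\<forall>p q. (p - q) ^ n = (\<Sum>k<M. lam k * (a k * p + b k * q) ^ n)" and
    h3: "(\<Sum>k<M. \<bar>lam k\<bar> * (a k * A + b k * B) ^ n) \<le> 2 ^ (n - 1) * (A + B) ^ n"
    by blast
  define L where "L = map (\<lambda>k. (lam k, a k *\<^sub>R y + b k *\<^sub>R z)) [0..<M]"
  have "set (map snd L) \<subseteq> K"
    using h1 y z by (auto simp: L_def intro!: K_add K_scale)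
  moreover have "tensor_poly n f L = f x ^ n" if f: "lin_functional_on V f" for f
  proof -
    have "tensor_poly n f L = (\<Sum>k<M. lam k * f (a k *\<^sub>R y + b k *\<^sub>R z) ^ n)"
      unfolding L_def by (rule tensor_poly_upt)
    also have "\<dots> = (\<Sum>k<M. lam k * (a k * f y + b k * f z) ^ n)"
      using lin_comb[OF f yV zV] by simp
    also have "\<dots> = (f y - f z) ^ n" using h2 by simp
    also have "\<dots> = f x ^ n" using lin_diff[OF f yV zV] xyz by simp
    finally show ?thesis .
  qed
  moreover have "rep_cost N n L \<le> 2 ^ (n - 1) * (plus_norm N K x + e) ^ n"
  proof -
    have "rep_cost N n L = (\<Sum>k<M. \<bar>lam k\<bar> * N (a k *\<^sub>R y + b k *\<^sub>R z) ^ n)"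
      unfolding L_def by (rule rep_cost_upt)
    also have "\<dots> \<le> (\<Sum>k<M. \<bar>lam k\<bar> * (a k * A + b k * B) ^ n)"
    proof (rule sum_mono)
      fix k assume "k \<in> {..<M}"
      then have ab: "0 \<le> a k" "0 \<le> b k" using h1 by auto
      have "N (a k *\<^sub>R y + b k *\<^sub>R z) \<le> a k * N y + b k * N z" by (rule N_comb[OF yV zV ab])
      also have "\<dots> \<le> a k * A + b k * B"
        using ab e by (intro add_mono mult_left_mono) (auto simp: A_def B_def)
      finally have "N (a k *\<^sub>R y + b k *\<^sub>R z) ^ n \<le> (a k * A + b k * B) ^ n"
        using ab by (intro power_mono) (auto intro!: N_nonneg V_add V_scale yV zV)
      then show "\<bar>lam k\<bar> * N (a k *\<^sub>R y + b k *\<^sub>R z) ^ n \<le> \<bar>lam k\<bar> * (a k * A + b k * B) ^ n"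
        by (intro mult_left_mono) auto
    qed
    also have "\<dots> \<le> 2 ^ (n - 1) * (A + B) ^ n" by (rule h3)
    also have "\<dots> \<le> 2 ^ (n - 1) * (plus_norm N K x + e) ^ n"
      using A0 B0 ABle by (intro mult_left_mono power_mono) auto
    finally show ?thesis .
  qed
  ultimately show ?thesis by blast
qed

lemma listrep:
  assumes n: "n \<ge> 1"
  shows "set (map snd ys) \<subseteq> V \<Longrightarrow> 0 < e \<Longrightarrow>
    \<exists>zs. set (map snd zs) \<subseteq> K \<and> (\<forall>f. lin_functional_on V f \<longrightarrow> tensor_poly n f zs = tensor_poly n f ys) \<and>
         rep_cost N n zs \<le> 2 ^ (n - 1) * rep_cost (plus_norm N K) n ys + e"
proof (induction ys arbitrary: e)
  case Nil
  then show ?case by (intro exI[of _ "[]"]) auto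
next
  case (Cons p ys)
  obtain a x where p: "p = (a, x)" by (cases p)
  have x: "x \<in> V" and ys: "set (map snd ys) \<subseteq> V" using Cons.prems p by auto
  define u where "u = plus_norm N K x"
  define g where "g d = \<bar>a\<bar> * (2 ^ (n - 1) * (u + d) ^ n)" for d :: real
  have "(g \<longlongrightarrow> g 0) (at_right 0)" unfolding g_def by (intro tendsto_intros)
  moreover have "g 0 < g 0 + e / 2" using Cons.prems by simp
  ultimately have "\<forall>\<^sub>F d in at_right 0. g d < g 0 + e / 2" by (rule order_tendstoD)
  then obtain bb where bb: "bb > 0" and hb: "\<And>d. d > 0 \<Longrightarrow> d < bb \<Longrightarrow> g d < g 0 + e / 2"
    unfolding eventually_at_right_field by auto
  define d where "d = bb / 2"
  have d: "0 < d" "g d < g 0 + e / 2" using bb hb[of d] by (auto simp: d_def)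
  obtain L where L1: "set (map snd L) \<subseteq> K" and L2: "\<forall>f. lin_functional_on V f \<longrightarrow> tensor_poly n f L = f x ^ n"
    and L3: "rep_cost N n L \<le> 2 ^ (n - 1) * (u + d) ^ n"
    using single[OF n x d(1)] unfolding u_def by blast
  obtain zs where z1: "set (map snd zs) \<subseteq> K" and z2: "\<forall>f. lin_functional_on V f \<longrightarrow> tensor_poly n f zs = tensor_poly n f ys"
    and z3: "rep_cost N n zs \<le> 2 ^ (n - 1) * rep_cost (plus_norm N K) n ys + e / 2"
    using Cons.IH[OF ys, of "e / 2"] Cons.prems by auto
  define W where "W = map (\<lambda>(c, w). (a * c, w)) L @ zs"
  have "set (map snd W) \<subseteq> K" using L1 z1 by (auto simp: W_def)
  moreover have "\<forall>f. lin_functional_on V f \<longrightarrow> tensor_poly n f W = tensor_poly n f (p # ys)"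
    using L2 z2 by (simp add: W_def tensor_poly_scale p)
  moreover have "rep_cost N n W \<le> 2 ^ (n - 1) * rep_cost (plus_norm N K) n (p # ys) + e"
  proof -
    have "rep_cost N n W = \<bar>a\<bar> * rep_cost N n L + rep_cost N n zs" by (simp add: W_def rep_cost_scale)
    also have "\<dots> \<le> g d + (2 ^ (n - 1) * rep_cost (plus_norm N K) n ys + e / 2)"
      using L3 z3 unfolding g_def by (intro add_mono mult_left_mono) auto
    also have "\<dots> \<le> g 0 + e / 2 + (2 ^ (n - 1) * rep_cost (plus_norm N K) n ys + e / 2)"
      using d by simp
    also have "\<dots> = 2 ^ (n - 1) * rep_cost (plus_norm N K) n (p # ys) + e"
      by (simp add: g_def p u_def algebra_simps)
    finally show ?thesis .
  qed
  ultimately show ?case by blast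
qed

lemma upper:
  assumes n: "n \<ge> 1" and xs: "xs \<in> sym_tensors V"
  shows "pi_s_plus_norm V N K n xs \<le> 2 ^ (n - 1) * pi_s_norm V (plus_norm N K) n xs"
proof -
  define P where "P = pi_s_plus_norm V N K n xs"
  define SP where "SP = {rep_cost N n ys | ys. set (map snd ys) \<subseteq> K \<and> sym_tensor_eq V n ys xs}"
  define S where "S = {rep_cost (plus_norm N K) n ys | ys. set (map snd ys) \<subseteq> V \<and> sym_tensor_eq V n ys xs}"
  have P: "P = Inf SP" by (simp add: P_def SP_def pi_s_plus_norm_def)
  have bdd: "bdd_below SP"
    unfolding SP_def bdd_below_def
    by (rule exI[of _ 0]) (auto intro!: rep_cost_nonneg N_nonneg KV)
  have Sne: "S \<noteq> {}" using xs by (auto simp: S_def sym_tensors_def sym_tensor_eq_def)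
  have key: "P \<le> 2 ^ (n - 1) * r" if "r \<in> S" for r
  proof (rule field_le_epsilon)
    fix e :: real assume e: "0 < e"
    from that obtain ys where r: "r = rep_cost (plus_norm N K) n ys" and ys: "set (map snd ys) \<subseteq> V"
      and eq: "sym_tensor_eq V n ys xs" by (auto simp: S_def)
    obtain zs where z1: "set (map snd zs) \<subseteq> K" and z2: "\<forall>f. lin_functional_on V f \<longrightarrow> tensor_poly n f zs = tensor_poly n f ys"
      and z3: "rep_cost N n zs \<le> 2 ^ (n - 1) * rep_cost (plus_norm N K) n ys + e"
      using listrep[OF n ys e] by blast
    have "sym_tensor_eq V n zs xs" using z2 eq by (simp add: sym_tensor_eq_def)
    then have "rep_cost N n zs \<in> SP" using z1 by (auto simp: SP_def)
    then have "P \<le> rep_cost N n zs" unfolding P by (rule cInf_lower[OF _ bdd])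
    then show "P \<le> 2 ^ (n - 1) * r + e" using z3 r by simp
  qed
  have "P / 2 ^ (n - 1) \<le> Inf S"
    by (rule cInf_greatest[OF Sne]) (use key in \<open>auto simp: field_simps\<close>)
  then show ?thesis by (simp add: P_def S_def pi_s_norm_def field_simps)
qed

end

lemma fun_ops: "(x + y) i = x i + y i" "(x - y) i = x i - y i" "(c *\<^sub>R x) i = c * x i" "(0::nat\<Rightarrow>real) i = 0"
  "(- x) i = - x i"
  for x y :: "nat \<Rightarrow> real"
  by (simp_all add: plus_fun_def fun_diff_def scaleR_fun_def zero_fun_def fun_Compl_def)

lemma summable_abs_add:
  fixes x y :: "nat \<Rightarrow> real"
  assumes "summable (\<lambda>i. \<bar>x i\<bar>)" "summable (\<lambda>i. \<bar>y i\<bar>)"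
  shows "summable (\<lambda>i. \<bar>x i + y i\<bar>)"
  by (rule summable_comparison_test'[OF summable_add[OF assms], of 0]) auto

lemma summable_abs_diff:
  fixes x y :: "nat \<Rightarrow> real"
  assumes "summable (\<lambda>i. \<bar>x i\<bar>)" "summable (\<lambda>i. \<bar>y i\<bar>)"
  shows "summable (\<lambda>i. \<bar>x i - y i\<bar>)"
  by (rule summable_comparison_test'[OF summable_add[OF assms], of 0]) auto

lemma l1_memI: "summable (\<lambda>i. \<bar>x i\<bar>) \<Longrightarrow> (\<And>i. m \<le> enat i \<Longrightarrow> x i = 0) \<Longrightarrow> x \<in> l1_space m"
  by (simp add: l1_space_def)
lemma l1_sum: "x \<in> l1_space m \<Longrightarrow> summable (\<lambda>i. \<bar>x i\<bar>)" by (simp add: l1_space_def)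
lemma l1_van: "x \<in> l1_space m \<Longrightarrow> m \<le> enat i \<Longrightarrow> x i = 0" by (simp add: l1_space_def)

lemma l1_add: "x \<in> l1_space m \<Longrightarrow> y \<in> l1_space m \<Longrightarrow> x + y \<in> l1_space m"
  by (intro l1_memI[of _ m]) (auto simp: fun_ops l1_van intro!: summable_abs_add dest: l1_sum)
lemma l1_diff: "x \<in> l1_space m \<Longrightarrow> y \<in> l1_space m \<Longrightarrow> x - y \<in> l1_space m"
  by (intro l1_memI[of _ m]) (auto simp: fun_ops l1_van intro!: summable_abs_diff dest: l1_sum)
lemma l1_scale: "x \<in> l1_space m \<Longrightarrow> c *\<^sub>R x \<in> l1_space m"
  by (intro l1_memI) (auto simp: fun_ops l1_van abs_mult intro!: summable_mult l1_sum)
lemma l1_zero: "0 \<in> l1_space m" by (intro l1_memI) (auto simp: fun_ops)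

lemma l1_norm_nonneg: "x \<in> l1_space m \<Longrightarrow> 0 \<le> l1_norm x"
  unfolding l1_norm_def by (intro suminf_nonneg l1_sum) auto

lemma l1_coord: "x \<in> l1_space m \<Longrightarrow> \<bar>x i\<bar> \<le> l1_norm x"
  unfolding l1_norm_def using sum_le_suminf[OF l1_sum, of x m "{i}"] by auto

lemma l1_coord2: "x \<in> l1_space m \<Longrightarrow> \<bar>x 0\<bar> + \<bar>x 1\<bar> \<le> l1_norm x"
  unfolding l1_norm_def using sum_le_suminf[OF l1_sum, of x m "{0,1}"] by auto

lemma l1_tri: "x \<in> l1_space m \<Longrightarrow> y \<in> l1_space m \<Longrightarrow> l1_norm (x + y) \<le> l1_norm x + l1_norm y"
  unfolding l1_norm_def fun_ops
  by (subst suminf_add) (auto intro!: suminf_le summable_abs_add summable_add abs_triangle_ineq dest: l1_sum)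

lemma l1_norm_scale: "x \<in> l1_space m \<Longrightarrow> l1_norm (c *\<^sub>R x) = \<bar>c\<bar> * l1_norm x"
  unfolding l1_norm_def fun_ops abs_mult by (intro suminf_mult l1_sum)

lemma l1_norm_zero_iff: "x \<in> l1_space m \<Longrightarrow> l1_norm x = 0 \<longleftrightarrow> x = 0"
  unfolding l1_norm_def using suminf_eq_zero_iff[OF l1_sum, of x m] by (auto simp: fun_eq_iff fun_ops)

definition posp :: "(nat \<Rightarrow> real) \<Rightarrow> nat \<Rightarrow> real" where "posp x = (\<lambda>i. max (x i) 0)"
definition negp :: "(nat \<Rightarrow> real) \<Rightarrow> nat \<Rightarrow> real" where "negp x = (\<lambda>i. max (- x i) 0)"

lemma posp_cone: "x \<in> l1_space m \<Longrightarrow> posp x \<in> l1_cone m"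
  unfolding l1_cone_def posp_def
  by (auto intro!: l1_memI summable_comparison_test'[OF l1_sum, of x m 0] simp: l1_van)
lemma negp_cone: "x \<in> l1_space m \<Longrightarrow> negp x \<in> l1_cone m"
  unfolding l1_cone_def negp_def
  by (auto intro!: l1_memI summable_comparison_test'[OF l1_sum, of x m 0] simp: l1_van)
lemma pos_neg: "x = posp x - negp x" by (auto simp: fun_eq_iff fun_ops posp_def negp_def)

lemma cone_space: "x \<in> l1_cone m \<Longrightarrow> x \<in> l1_space m" by (simp add: l1_cone_def)

lemma posneg_norm: "x \<in> l1_space m \<Longrightarrow> l1_norm (posp x) + l1_norm (negp x) = l1_norm x"
proof -
  assume x: "x \<in> l1_space m"
  have s1: "summable (\<lambda>i. \<bar>posp x i\<bar>)" and s2: "summable (\<lambda>i. \<bar>negp x i\<bar>)"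
    using posp_cone[OF x] negp_cone[OF x] by (auto dest!: cone_space l1_sum)
  show ?thesis unfolding l1_norm_def
    by (subst suminf_add[OF s1 s2]) (auto simp: posp_def negp_def intro!: arg_cong[where f=suminf])
qed

lemma l1_norm_diff_le: "y \<in> l1_space m \<Longrightarrow> z \<in> l1_space m \<Longrightarrow> l1_norm (y - z) \<le> l1_norm y + l1_norm z"
  unfolding l1_norm_def fun_ops
  by (subst suminf_add) (auto intro!: suminf_le summable_abs_diff summable_add abs_triangle_ineq4 dest: l1_sum)

lemma plus_l1: 
  assumes x: "x \<in> l1_space m"
  shows "plus_norm l1_norm (l1_cone m) x = l1_norm x"
proof -
  define S where "S = {l1_norm y + l1_norm z | y z. y \<in> l1_cone m \<and> z \<in> l1_cone m \<and> x = y - z}"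
  have mem: "l1_norm x \<in> S" unfolding S_def using posp_cone[OF x] negp_cone[OF x] pos_neg[of x] posneg_norm[OF x]
    by force
  have bdd: "bdd_below S" unfolding S_def bdd_below_def
    by (rule exI[of _ 0]) (auto intro!: add_nonneg_nonneg l1_norm_nonneg cone_space)
  have "Inf S \<le> l1_norm x" by (rule cInf_lower[OF mem bdd])
  moreover have "l1_norm x \<le> Inf S"
    by (rule cInf_greatest) (use mem in \<open>auto simp: S_def intro!: l1_norm_diff_le cone_space\<close>)
  ultimately show ?thesis unfolding plus_norm_def S_def[symmetric] by simp
qed

lemma l1_ons: "ordered_normed_space (l1_space m) l1_norm (l1_cone m)"
  unfolding ordered_normed_space_def
proof (intro conjI)
  show "is_subspace (l1_space m)" unfolding is_subspace_def using l1_zero l1_add l1_scale by blast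
  show "is_norm_on (l1_space m) l1_norm" unfolding is_norm_on_def
    using l1_norm_nonneg l1_norm_zero_iff l1_norm_scale l1_tri by blast
  show "closed_convex_cone (l1_space m) l1_norm (l1_cone m)"
    unfolding closed_convex_cone_def
  proof (intro conjI allI impI ballI)
    show "l1_cone m \<subseteq> l1_space m" using cone_space by blast
    show "l1_cone m \<noteq> {}" using l1_zero by (auto simp: l1_cone_def fun_ops intro!: exI[of _ 0])
    show "x + y \<in> l1_cone m" if "x \<in> l1_cone m" "y \<in> l1_cone m" for x y
      using that l1_add by (auto simp: l1_cone_def fun_ops)
    show "c *\<^sub>R x \<in> l1_cone m" if "0 \<le> c" "x \<in> l1_cone m" for c x
      using that l1_scale by (auto simp: l1_cone_def fun_ops)
    show "x \<in> l1_cone m" if s: "\<forall>k. s k \<in> l1_cone m" and x: "x \<in> l1_space m"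
      and lim: "(\<lambda>k. l1_norm (s k - x)) \<longlonglongrightarrow> 0" for s x
    proof -
      have "0 \<le> x i" for i
      proof (rule ccontr)
        assume "\<not> 0 \<le> x i"
        then have "0 < - x i" by simp
        from order_tendstoD(2)[OF lim this] obtain k where k: "l1_norm (s k - x) < - x i"
          by (auto simp: eventually_sequentially)
        have "\<bar>(s k - x) i\<bar> \<le> l1_norm (s k - x)"
          using s x l1_diff[OF cone_space x, of "s k"] l1_coord by blast
        moreover have "0 \<le> s k i" using s by (auto simp: l1_cone_def)
        ultimately show False using k by (auto simp: fun_ops)
      qed
      then show ?thesis using x by (simp add: l1_cone_def)
    qed
  qed
  show "\<forall>x\<in>l1_space m. \<exists>y\<in>l1_cone m. \<exists>z\<in>l1_cone m. x = y - z"
    using posp_cone negp_cone pos_neg by blast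
  show "\<exists>C. \<forall>x\<in>l1_space m. l1_norm x \<le> 1 \<longrightarrow> plus_norm l1_norm (l1_cone m) x \<le> C"
    using plus_l1 by (intro exI[of _ 1]) auto
qed

definition ee :: "nat \<Rightarrow> real" where "ee = (\<lambda>i. if i = 0 then 1 else if i = 1 then -1 else 0)"

lemma ee_mem: assumes m: "2 \<le> m" shows "ee \<in> l1_space m"
proof (rule l1_memI)
  show "summable (\<lambda>i. \<bar>ee i\<bar>)" by (rule summable_finite[of "{0,1}"]) (auto simp: ee_def)
  fix i assume i: "m \<le> enat i"
  have "\<not> i \<le> 1"
  proof
    assume "i \<le> 1"
    then have "enat i \<le> 1" by (simp add: one_enat_def)
    then have "m \<le> 1" using i by (rule order_trans[rotated])
    with m show False by (cases m) (auto simp: one_enat_def numeral_eq_enat)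
  qed
  then show "ee i = 0" by (auto simp: ee_def)
qed

lemma ee_norm: "l1_norm ee = 2"
  unfolding l1_norm_def by (subst suminf_finite[of "{0,1}"]) (auto simp: ee_def)

lemma abs_tp_le:
  "(\<And>w. w \<in> set (map snd ys) \<Longrightarrow> \<bar>G w\<bar> \<le> N w ^ n) \<Longrightarrow>
   \<bar>sum_list (map (\<lambda>(a, w). a * G w) ys)\<bar> \<le> rep_cost N n ys"
proof (induction ys)
  case (Cons p ys)
  obtain a w where p: "p = (a, w)" by (cases p)
  have "\<bar>a * G w\<bar> \<le> \<bar>a\<bar> * N w ^ n" using Cons.prems p by (auto simp: abs_mult intro!: mult_left_mono)
  moreover have "\<bar>sum_list (map (\<lambda>(a, w). a * G w) ys)\<bar> \<le> rep_cost N n ys"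
    using Cons.prems by (intro Cons.IH) auto
  moreover have "\<bar>a * G w + sum_list (map (\<lambda>(a, w). a * G w) ys)\<bar> \<le> \<bar>a * G w\<bar> + \<bar>sum_list (map (\<lambda>(a, w). a * G w) ys)\<bar>"
    by (rule abs_triangle_ineq)
  ultimately show ?case using p by simp
qed simp

lemma sum_list_sum_swap:
  "sum_list (map (\<lambda>p. \<Sum>j\<in>J. F p j) ys) = (\<Sum>j\<in>J. sum_list (map (\<lambda>p. F p j) ys))"
  by (induction ys) (auto simp: sum.distrib)

lemma rep_cost_cong: "set (map snd ys) \<subseteq> V \<Longrightarrow> (\<And>x. x \<in> V \<Longrightarrow> N1 x = N2 x) \<Longrightarrow> rep_cost N1 n ys = rep_cost N2 n ys"
  by (induction ys) auto

lemma pi_cong: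
  assumes "\<And>x. x \<in> V \<Longrightarrow> N1 x = N2 x"
  shows "pi_s_norm V N1 n xs = pi_s_norm V N2 n xs"
proof -
  have h: "snd ` set ys \<subseteq> V \<Longrightarrow> rep_cost N1 n ys = rep_cost N2 n ys" for ys
    using rep_cost_cong[of ys V N1 N2 n] assms by simp
  show ?thesis unfolding pi_s_norm_def by (rule arg_cong[where f=Inf]) (auto, (metis h)+)
qed

lemma lin_all: "lin_functional_on V (\<lambda>w::nat\<Rightarrow>real. a * w 0 + b * w 1)"
  by (simp add: lin_functional_on_def fun_ops algebra_simps)

lemma pi_lower:
  assumes m: "2 \<le> m" and ys: "set (map snd ys) \<subseteq> l1_space m" and eq: "sym_tensor_eq (l1_space m) n ys [(1, ee)]"
  shows "2 ^ n \<le> rep_cost l1_norm n ys"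
proof -
  define f where "f = (\<lambda>w::nat\<Rightarrow>real. 1 * w 0 + (-1) * w 1)"
  have lf: "lin_functional_on (l1_space m) f" unfolding f_def by (rule lin_all)
  have "tensor_poly n f ys = tensor_poly n f [(1, ee)]" using eq[unfolded sym_tensor_eq_def, rule_format, OF lf] .
  also have "\<dots> = 2 ^ n" by (simp add: f_def ee_def)
  finally have t: "tensor_poly n f ys = 2 ^ n" .
  have "\<bar>sum_list (map (\<lambda>(a, w). a * f w ^ n) ys)\<bar> \<le> rep_cost l1_norm n ys"
  proof (rule abs_tp_le)
    fix w assume "w \<in> set (map snd ys)"
    then have w: "w \<in> l1_space m" using ys by auto
    have "\<bar>f w\<bar> \<le> l1_norm w" using l1_coord2[OF w] by (simp add: f_def)
    then show "\<bar>f w ^ n\<bar> \<le> l1_norm w ^ n" by (simp add: power_abs power_mono)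
  qed
  then show ?thesis using t by (simp add: tensor_poly_def)
qed

lemma poly_sum_n: "degree p \<le> n \<Longrightarrow> poly p x = (\<Sum>i\<le>n. coeff p i * x ^ i)" for p :: "real poly"
  unfolding poly_altdef
  by (rule sum.mono_neutral_left) (auto simp: coeff_eq_0)

lemma phi_bound:
  fixes \<alpha> \<beta> :: real
  assumes "0 \<le> \<alpha>" "0 \<le> \<beta>" "n \<ge> 1"
  shows "\<bar>\<Sum>i\<le>n. coeff (cheb n) i * ((\<alpha> - \<beta>) ^ i * (\<alpha> + \<beta>) ^ (n - i))\<bar> \<le> (\<alpha> + \<beta>) ^ n"
proof (cases "\<alpha> + \<beta> = 0")
  case True
  then have "\<alpha> = 0" "\<beta> = 0" using assms by auto
  moreover have "(\<Sum>i\<le>n. coeff (cheb n) i * ((0::real) ^ i * 0 ^ (n - i))) = 0"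
    by (rule sum.neutral) (use assms(3) in auto)
  ultimately show ?thesis by simp
next
  case False
  define S where "S = \<alpha> + \<beta>"
  define u where "u = (\<alpha> - \<beta>) / S"
  have S: "0 < S" using False assms by (simp add: S_def)
  have u: "-1 \<le> u" "u \<le> 1" using assms S by (auto simp: u_def S_def field_simps)
  have "(\<Sum>i\<le>n. coeff (cheb n) i * ((\<alpha> - \<beta>) ^ i * (\<alpha> + \<beta>) ^ (n - i)))
        = (\<Sum>i\<le>n. S ^ n * (coeff (cheb n) i * u ^ i))"
  proof (rule sum.cong)
    fix i assume "i \<in> {..n}"
    then have "S ^ n = S ^ i * S ^ (n - i)" by (simp add: power_add[symmetric])
    moreover have "\<alpha> - \<beta> = u * S" using S by (simp add: u_def)
    ultimately show "coeff (cheb n) i * ((\<alpha> - \<beta>) ^ i * (\<alpha> + \<beta>) ^ (n - i)) = S ^ n * (coeff (cheb n) i * u ^ i)"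
      by (simp add: S_def power_mult_distrib)
  qed simp
  also have "\<dots> = S ^ n * poly (cheb n) u"
    by (simp add: poly_sum_n[OF degree_cheb] sum_distrib_left)
  finally have e: "(\<Sum>i\<le>n. coeff (cheb n) i * ((\<alpha> - \<beta>) ^ i * (\<alpha> + \<beta>) ^ (n - i))) = S ^ n * poly (cheb n) u" .
  have "poly (cheb n) u = cos (real n * arccos u)"
    using cheb_cos[of n "arccos u"] cos_arccos[OF u] by simp
  then have "\<bar>poly (cheb n) u\<bar> \<le> 1" by simp
  then have "\<bar>S ^ n * poly (cheb n) u\<bar> \<le> S ^ n * 1" using S by (simp add: abs_mult mult_left_mono)
  then show ?thesis unfolding e by (simp add: S_def)
qed

lemma plus_lower:
  assumes m: "2 \<le> m" and n: "n \<ge> 1" and ys: "set (map snd ys) \<subseteq> l1_cone m"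
    and eq: "sym_tensor_eq (l1_space m) n ys [(1, ee)]"
  shows "2 ^ (n - 1) * 2 ^ n \<le> rep_cost l1_norm n ys"
proof -
  define r where "r = (\<lambda>w::nat\<Rightarrow>real. w 0 - w 1)"
  define s where "s = (\<lambda>w::nat\<Rightarrow>real. w 0 + w 1)"
  define M where "M j = sum_list (map (\<lambda>p. fst p * (r (snd p) ^ (n - j) * s (snd p) ^ j)) ys)" for j
  define c where "c j = of_nat (n choose j) * M j" for j
  have poly_id: "(\<Sum>j\<le>n. c j * t ^ j) = 2 ^ n" for t :: real
  proof -
    define g where "g = (\<lambda>w::nat\<Rightarrow>real. (1 + t) * w 0 + (t - 1) * w 1)"
    have gl: "g w = r w + t * s w" for w by (simp add: g_def r_def s_def algebra_simps)
    have lg: "lin_functional_on (l1_space m) g" unfolding g_def by (rule lin_all)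
    have "tensor_poly n g ys = tensor_poly n g [(1, ee)]" using eq[unfolded sym_tensor_eq_def, rule_format, OF lg] .
    also have "\<dots> = 2 ^ n" by (simp add: g_def ee_def)
    finally have "tensor_poly n g ys = 2 ^ n" .
    moreover have "tensor_poly n g ys = (\<Sum>j\<le>n. c j * t ^ j)"
    proof -
      have "a * g w ^ n = (\<Sum>j\<le>n. of_nat (n choose j) * (a * (r w ^ (n - j) * s w ^ j)) * t ^ j)" for a w
      proof -
        have "g w ^ n = (t * s w + r w) ^ n" by (simp add: gl add.commute)
        also have "\<dots> = (\<Sum>j\<le>n. of_nat (n choose j) * (t * s w) ^ j * r w ^ (n - j))" by (rule binomial_ring)
        finally show ?thesis by (simp add: sum_distrib_left power_mult_distrib algebra_simps)
      qed
      then have "tensor_poly n g ys = sum_list (map (\<lambda>p. \<Sum>j\<le>n. of_nat (n choose j) * (fst p * (r (snd p) ^ (n - j) * s (snd p) ^ j)) * t ^ j) ys)"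
        unfolding tensor_poly_def by (intro arg_cong[where f=sum_list] map_cong) auto
      also have "\<dots> = (\<Sum>j\<le>n. c j * t ^ j)"
        unfolding sum_list_sum_swap c_def M_def
        by (intro sum.cong refl) (simp add: sum_list_const_mult sum_list_mult_const case_prod_beta)
      finally show ?thesis .
    qed
    ultimately show ?thesis by simp
  qed
  then have "c 0 = 2 ^ n \<and> (\<forall>j\<in>{1..n}. c j = 0)" using polyfun_eq_const[of c n "2 ^ n"] by blast
  then have M0: "M 0 = 2 ^ n" and Mj: "\<And>j. 1 \<le> j \<Longrightarrow> j \<le> n \<Longrightarrow> M j = 0"
    by (auto simp: c_def)
  define \<tau> where "\<tau> i = coeff (cheb n) i" for i
  define \<Phi> where "\<Phi> w = (\<Sum>i\<le>n. \<tau> i * (r w ^ i * s w ^ (n - i)))" for w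
  have "sum_list (map (\<lambda>(a, w). a * \<Phi> w) ys) = (\<Sum>i\<le>n. \<tau> i * M (n - i))"
  proof -
    have "sum_list (map (\<lambda>(a, w). a * \<Phi> w) ys) = sum_list (map (\<lambda>p. \<Sum>i\<le>n. \<tau> i * (fst p * (r (snd p) ^ i * s (snd p) ^ (n - i)))) ys)"
      unfolding \<Phi>_def by (intro arg_cong[where f=sum_list] map_cong) (auto simp: sum_distrib_left algebra_simps)
    also have "\<dots> = (\<Sum>i\<le>n. \<tau> i * M (n - i))"
      unfolding sum_list_sum_swap M_def
      by (intro sum.cong refl) (simp add: sum_list_const_mult case_prod_beta)
    finally show ?thesis .
  qed
  also have "\<dots> = (\<Sum>i\<le>n. if i = n then \<tau> n * 2 ^ n else 0)"
    by (rule sum.cong) (auto simp: M0 Mj)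
  also have "\<dots> = 2 ^ (n - 1) * 2 ^ n" using n by (simp add: \<tau>_def coeff_cheb_top)
  finally have val: "sum_list (map (\<lambda>(a, w). a * \<Phi> w) ys) = 2 ^ (n - 1) * 2 ^ n" .
  have "\<bar>sum_list (map (\<lambda>(a, w). a * \<Phi> w) ys)\<bar> \<le> rep_cost l1_norm n ys"
  proof (rule abs_tp_le)
    fix w assume "w \<in> set (map snd ys)"
    then have w: "w \<in> l1_cone m" using ys by auto
    then have w0: "0 \<le> w 0" "0 \<le> w 1" and wV: "w \<in> l1_space m" by (auto simp: l1_cone_def)
    have "\<bar>\<Phi> w\<bar> \<le> (w 0 + w 1) ^ n"
      using phi_bound[OF w0 n] by (simp add: \<Phi>_def \<tau>_def r_def s_def)
    also have "\<dots> \<le> l1_norm w ^ n" using l1_coord2[OF wV] w0 by (intro power_mono) auto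
    finally show "\<bar>\<Phi> w\<bar> \<le> l1_norm w ^ n" .
  qed
  then show ?thesis using val by simp
qed

lemma pi_nonneg_l1:
  assumes xs: "xs \<in> sym_tensors (l1_space m)"
  shows "0 \<le> pi_s_norm (l1_space m) l1_norm n xs"
  unfolding pi_s_norm_def
proof (rule cInf_greatest)
  show "{rep_cost l1_norm n ys |ys. set (map snd ys) \<subseteq> l1_space m \<and> sym_tensor_eq (l1_space m) n ys xs} \<noteq> {}"
    using xs by (auto simp: sym_tensors_def sym_tensor_eq_def)
  show "\<And>x. x \<in> {rep_cost l1_norm n ys |ys. set (map snd ys) \<subseteq> l1_space m \<and> sym_tensor_eq (l1_space m) n ys xs} \<Longrightarrow> 0 \<le> x"
    by (auto intro!: rep_cost_nonneg l1_norm_nonneg)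
qed

lemma pi_ee:
  assumes m: "2 \<le> m"
  shows "pi_s_norm (l1_space m) l1_norm n [(1, ee)] = 2 ^ n"
proof -
  define S where "S = {rep_cost l1_norm n ys |ys. set (map snd ys) \<subseteq> l1_space m \<and> sym_tensor_eq (l1_space m) n ys [(1, ee)]}"
  have mem: "2 ^ n \<in> S" unfolding S_def using ee_mem[OF m] ee_norm
    by (auto simp: sym_tensor_eq_def intro!: exI[of _ "[(1, ee)]"])
  have bdd: "bdd_below S" unfolding S_def bdd_below_def
    by (rule exI[of _ 0]) (auto intro!: rep_cost_nonneg l1_norm_nonneg)
  have "Inf S \<le> 2 ^ n" by (rule cInf_lower[OF mem bdd])
  moreover have "2 ^ n \<le> Inf S"
    by (rule cInf_greatest) (use mem pi_lower[OF m] in \<open>auto simp: S_def\<close>)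
  ultimately show ?thesis unfolding pi_s_norm_def S_def[symmetric] by simp
qed

lemma plus_ee:
  assumes m: "2 \<le> m" and n: "n \<ge> 1"
  shows "2 ^ (n - 1) * 2 ^ n \<le> pi_s_plus_norm (l1_space m) l1_norm (l1_cone m) n [(1, ee)]"
  unfolding pi_s_plus_norm_def
proof (rule cInf_greatest)
  obtain L where L1: "set (map snd L) \<subseteq> l1_cone m" and
    L2: "\<forall>f. lin_functional_on (l1_space m) f \<longrightarrow> tensor_poly n f L = f ee ^ n"
    using single[OF l1_ons n ee_mem[OF m], of 1] by auto
  have "sym_tensor_eq (l1_space m) n L [(1, ee)]" using L2 by (simp add: sym_tensor_eq_def)
  then show "{rep_cost l1_norm n ys |ys. set (map snd ys) \<subseteq> l1_cone m \<and> sym_tensor_eq (l1_space m) n ys [(1, ee)]} \<noteq> {}"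
    using L1 by blast
  show "\<And>x. x \<in> {rep_cost l1_norm n ys |ys. set (map snd ys) \<subseteq> l1_cone m \<and> sym_tensor_eq (l1_space m) n ys [(1, ee)]} \<Longrightarrow> 2 ^ (n - 1) * 2 ^ n \<le> x"
    using plus_lower[OF m n] by auto
qed

lemma pi_plus_l1: "pi_s_norm (l1_space m) (plus_norm l1_norm (l1_cone m)) n xs = pi_s_norm (l1_space m) l1_norm n xs"
  by (rule pi_cong) (rule plus_l1)

lemma ee_sym: "2 \<le> m \<Longrightarrow> [(1, ee)] \<in> sym_tensors (l1_space m)"
  using ee_mem by (simp add: sym_tensors_def)

theorem theorem6p1:
  shows
  "(\<forall>n::nat. n \<ge> 1 \<longrightarrow>
      (\<forall>(V::'a::real_vector set) N K. ordered_normed_space V N K \<longrightarrow>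
         (\<forall>xs \<in> sym_tensors V.
            pi_s_plus_norm V N K n xs \<le> 2 ^ (n - 1) * pi_s_norm V (plus_norm N K) n xs))
    \<and> (\<forall>C::real. C < 2 ^ (n - 1) \<longrightarrow>
         (\<exists>(V::(nat \<Rightarrow> real) set) N K. ordered_normed_space V N K \<and>
            (\<exists>xs \<in> sym_tensors V.
               \<not> pi_s_plus_norm V N K n xs \<le> C * pi_s_norm V (plus_norm N K) n xs))))
   \<and>
   (\<forall>(m::enat) (n::nat). 2 \<le> m \<and> 1 \<le> n \<longrightarrow>
      c_pis_splus n (l1_space m) l1_norm (l1_cone m) = ereal (2 ^ (n - 1)))"
proof (intro conjI allI impI ballI)
  fix n :: nat and V :: "'a set" and N K xs
  assume "n \<ge> 1" "ordered_normed_space V N K" "xs \<in> sym_tensors V"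
  then show "pi_s_plus_norm V N K n xs \<le> 2 ^ (n - 1) * pi_s_norm V (plus_norm N K) n xs"
    using upper by blast
next
  fix n :: nat and C :: real
  assume n: "n \<ge> 1" and C: "C < 2 ^ (n - 1)"
  define m :: enat where "m = 2"
  have m: "2 \<le> m" by (simp add: m_def)
  have pi: "pi_s_norm (l1_space m) (plus_norm l1_norm (l1_cone m)) n [(1, ee)] = 2 ^ n"
    using pi_plus_l1 pi_ee[OF m] by simp
  have pl: "2 ^ (n - 1) * 2 ^ n \<le> pi_s_plus_norm (l1_space m) l1_norm (l1_cone m) n [(1, ee)]"
    by (rule plus_ee[OF m n])
  have "C * 2 ^ n < 2 ^ (n - 1) * 2 ^ n" using C by simp
  then have "\<not> pi_s_plus_norm (l1_space m) l1_norm (l1_cone m) n [(1, ee)] \<le> C * pi_s_norm (l1_space m) (plus_norm l1_norm (l1_cone m)) n [(1, ee)]"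
    using pl unfolding pi by linarith
  then show "\<exists>(V::(nat \<Rightarrow> real) set) N K. ordered_normed_space V N K \<and>
            (\<exists>xs \<in> sym_tensors V. \<not> pi_s_plus_norm V N K n xs \<le> C * pi_s_norm V (plus_norm N K) n xs)"
    using l1_ons ee_sym[OF m] by blast
next
  fix m :: enat and n :: nat
  assume "2 \<le> m \<and> 1 \<le> n"
  then have m: "2 \<le> m" and n: "n \<ge> 1" by auto
  define V where "V = l1_space m"
  define K where "K = l1_cone m"
  define S where "S = {xs \<in> sym_tensors V. \<not> sym_tensor_eq V n xs []}"
  define R where "R xs = pi_s_plus_norm V l1_norm K n xs / pi_s_norm V l1_norm n xs" for xs
  have ub: "R xs \<le> 2 ^ (n - 1)" if xs: "xs \<in> sym_tensors V" for xs
  proof -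
    have u: "pi_s_plus_norm V l1_norm K n xs \<le> 2 ^ (n - 1) * pi_s_norm V l1_norm n xs"
      using upper[OF l1_ons n xs[unfolded V_def]] pi_plus_l1 by (simp add: V_def K_def)
    have p0: "0 \<le> pi_s_norm V l1_norm n xs" using pi_nonneg_l1 xs by (simp add: V_def)
    show ?thesis
    proof (cases "pi_s_norm V l1_norm n xs = 0")
      case True then show ?thesis by (simp add: R_def)
    next
      case False
      then have "0 < pi_s_norm V l1_norm n xs" using p0 by simp
      then show ?thesis using u by (simp add: R_def divide_le_eq)
    qed
  qed
  have wit: "[(1, ee)] \<in> S"
  proof -
    have "tensor_poly n (\<lambda>w. 1 * w 0 + (-1) * w 1) [(1, ee)] \<noteq> tensor_poly n (\<lambda>w. 1 * w 0 + (-1) * w 1) []"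
      by (simp add: ee_def)
    then have "\<not> sym_tensor_eq V n [(1, ee)] []" unfolding sym_tensor_eq_def using lin_all by blast
    then show ?thesis using ee_sym[OF m] by (simp add: S_def V_def)
  qed
  have Rw: "2 ^ (n - 1) \<le> R [(1, ee)]"
  proof -
    have "pi_s_norm V l1_norm n [(1, ee)] = 2 ^ n" using pi_ee[OF m] by (simp add: V_def)
    moreover have "2 ^ (n - 1) * 2 ^ n \<le> pi_s_plus_norm V l1_norm K n [(1, ee)]"
      using plus_ee[OF m n] by (simp add: V_def K_def)
    ultimately show ?thesis by (simp add: R_def field_simps)
  qed
  have "c_pis_splus n V l1_norm K = (SUP xs\<in>S. ereal (R xs))"
    by (simp add: c_pis_splus_def S_def R_def)
  also have "\<dots> = ereal (2 ^ (n - 1))"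
  proof (rule antisym)
    show "(SUP xs\<in>S. ereal (R xs)) \<le> ereal (2 ^ (n - 1))"
      by (rule SUP_least) (use ub in \<open>auto simp: S_def\<close>)
    show "ereal (2 ^ (n - 1)) \<le> (SUP xs\<in>S. ereal (R xs))"
      by (rule SUP_upper2[OF wit]) (use Rw in simp)
  qed
  finally show "c_pis_splus n (l1_space m) l1_norm (l1_cone m) = ereal (2 ^ (n - 1))"
    by (simp add: V_def K_def)
qed

end
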